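(* Let $K$ be a field of characteristic $0$ and let $\eta\in K\setminus\{0\}$ not be a root of unity. Then the down-up algebra $A_\eta=A(1+\eta,-\eta,1)$ does not have property $(\diamond)$: there exists a finitely generated monolithic left $A_\eta$-module that is not artinian.
   Context: For $\alpha,\beta,\gamma\in K$, the down-up algebra $A(\alpha,\beta,\gamma)$ is the $K$-algebra generated by $d,u$ with relations $d^2u=\alpha dud+\beta ud^2+\gamma d$ and $du^2=\alpha udu+\beta u^2d+\gamma u$. A module $M$ is monolithic if the intersection of all nonzero submodules of $M$ is nonzero. A noetherian ring has property $(\diamond)$ if every finitely generated monolithic module over it is artinian. *)

theory Defs
  imports Main "HOL-Library.Function_Algebras"
begin

text \<open>Left modules over the down-up algebra A(alpha,beta,gamma), i.e. over the K-algebra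
generated by d,u subject to the two down-up relations.  By the universal property of an
algebra given by generators and relations, a left A-module is the same as a K-vector space
together with two K-linear operators D (action of d) and U (action of u) satisfying the
relations.  Since we need to quantify existentially over modules, the underlying vector
space is a K-subspace V of the fixed ambient space nat => K (every finitely generated
A-module has countable K-dimension, hence is isomorphic to such a subspace).\<close>

definition vsmult :: "'k::field \<Rightarrow> (nat \<Rightarrow> 'k) \<Rightarrow> (nat \<Rightarrow> 'k)" where
  "vsmult c x = (\<lambda>n. c * x n)"

definition is_subspace :: "(nat \<Rightarrow> 'k::field) set \<Rightarrow> bool" where
  "is_subspace V \<longleftrightarrow> 0 \<in> V \<and> (\<forall>x\<in>V. \<forall>y\<in>V. x + y \<in> V) \<and> (\<forall>c. \<forall>x\<in>V. vsmult c x \<in> V)"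

definition downup_module ::
  "'k::field \<Rightarrow> 'k \<Rightarrow> 'k \<Rightarrow> (nat \<Rightarrow> 'k) set \<Rightarrow> ((nat \<Rightarrow> 'k) \<Rightarrow> (nat \<Rightarrow> 'k))
     \<Rightarrow> ((nat \<Rightarrow> 'k) \<Rightarrow> (nat \<Rightarrow> 'k)) \<Rightarrow> bool" where
  "downup_module \<alpha> \<beta> \<gamma> V D U \<longleftrightarrow>
     is_subspace V \<and>
     (\<forall>x\<in>V. D x \<in> V \<and> U x \<in> V) \<and>
     (\<forall>x\<in>V. \<forall>y\<in>V. D (x + y) = D x + D y \<and> U (x + y) = U x + U y) \<and>
     (\<forall>c. \<forall>x\<in>V. D (vsmult c x) = vsmult c (D x) \<and> U (vsmult c x) = vsmult c (U x)) \<and>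
     (\<forall>x\<in>V. D (D (U x)) = vsmult \<alpha> (D (U (D x))) + vsmult \<beta> (U (D (D x))) + vsmult \<gamma> (D x)) \<and>
     (\<forall>x\<in>V. D (U (U x)) = vsmult \<alpha> (U (D (U x))) + vsmult \<beta> (U (U (D x))) + vsmult \<gamma> (U x))"

definition submodule ::
  "(nat \<Rightarrow> 'k::field) set \<Rightarrow> ((nat \<Rightarrow> 'k) \<Rightarrow> (nat \<Rightarrow> 'k)) \<Rightarrow> ((nat \<Rightarrow> 'k) \<Rightarrow> (nat \<Rightarrow> 'k))
     \<Rightarrow> (nat \<Rightarrow> 'k) set \<Rightarrow> bool" where
  "submodule V D U W \<longleftrightarrow> W \<subseteq> V \<and> is_subspace W \<and> (\<forall>x\<in>W. D x \<in> W \<and> U x \<in> W)"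

definition finitely_generated_mod ::
  "(nat \<Rightarrow> 'k::field) set \<Rightarrow> ((nat \<Rightarrow> 'k) \<Rightarrow> (nat \<Rightarrow> 'k)) \<Rightarrow> ((nat \<Rightarrow> 'k) \<Rightarrow> (nat \<Rightarrow> 'k)) \<Rightarrow> bool" where
  "finitely_generated_mod V D U \<longleftrightarrow>
     (\<exists>S. finite S \<and> S \<subseteq> V \<and> V = \<Inter>{W. submodule V D U W \<and> S \<subseteq> W})"

definition monolithic_mod ::
  "(nat \<Rightarrow> 'k::field) set \<Rightarrow> ((nat \<Rightarrow> 'k) \<Rightarrow> (nat \<Rightarrow> 'k)) \<Rightarrow> ((nat \<Rightarrow> 'k) \<Rightarrow> (nat \<Rightarrow> 'k)) \<Rightarrow> bool" where
  "monolithic_mod V D U \<longleftrightarrow> V \<inter> \<Inter>{W. submodule V D U W \<and> W \<noteq> {0}} \<noteq> {0}"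

definition artinian_mod ::
  "(nat \<Rightarrow> 'k::field) set \<Rightarrow> ((nat \<Rightarrow> 'k) \<Rightarrow> (nat \<Rightarrow> 'k)) \<Rightarrow> ((nat \<Rightarrow> 'k) \<Rightarrow> (nat \<Rightarrow> 'k)) \<Rightarrow> bool" where
  "artinian_mod V D U \<longleftrightarrow>
     (\<forall>F :: nat \<Rightarrow> (nat \<Rightarrow> 'k) set. (\<forall>n. submodule V D U (F n)) \<and> (\<forall>n. F (Suc n) \<subseteq> F n)
        \<longrightarrow> (\<exists>N. \<forall>n\<ge>N. F n = F N))"

end

theory Submission
  imports Defs "HOL-Computational_Algebra.Polynomial"
begin


locale duc =
  fixes eta :: "'k::field_char_0" and tau :: 'k
  assumes eta_nz: "eta \<noteq> 0" and eta_nru: "\<forall>n::nat. n > 0 \<longrightarrow> eta ^ n \<noteq> 1"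
    and tau_nz: "tau \<noteq> 0"
    and dnz: "\<forall>k::nat. k \<ge> 1 \<longrightarrow> of_nat k + tau * (1 - eta ^ k) \<noteq> 0"
begin

definition lam :: 'k where "lam = 1 / (1 - eta)"
definition delta :: "nat \<Rightarrow> 'k" where "delta k = lam * (of_nat k + tau * (1 - eta ^ k))"
definition Dop :: "(nat \<Rightarrow> 'k) \<Rightarrow> (nat \<Rightarrow> 'k)" where "Dop x = (\<lambda>n. delta (Suc n) * x (Suc n))"
definition Uop :: "(nat \<Rightarrow> 'k) \<Rightarrow> (nat \<Rightarrow> 'k)" where "Uop x = (\<lambda>n. if n = 0 then 0 else x (n - 1))"

lemma eta_ne1: "eta \<noteq> 1" using eta_nru by (metis power_one_right zero_less_one)

lemma lam_eq: "lam * (1 - eta) = 1" unfolding lam_def using eta_ne1 by simp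

lemma delta0: "delta 0 = 0" by (simp add: delta_def)

lemma delta_rec: "delta (Suc (Suc n)) - (1 + eta) * delta (Suc n) + eta * delta n = 1"
proof -
  have "delta (Suc (Suc n)) - (1 + eta) * delta (Suc n) + eta * delta n
      = lam * (1 - eta)"
    unfolding delta_def by (simp add: algebra_simps)
  then show ?thesis using lam_eq by simp
qed

lemma delta_SS: "delta (Suc (Suc n)) = (1 + eta) * delta (Suc n) - eta * delta n + 1"
  using delta_rec[of n] by (simp add: algebra_simps)

lemma UDD: "Uop (Dop (Dop x)) n = delta n * delta (Suc n) * x (Suc n)"
  by (cases n) (simp_all add: Uop_def Dop_def delta0)
lemma DDU: "Dop (Dop (Uop x)) n = delta (Suc n) * delta (Suc (Suc n)) * x (Suc n)"
  by (simp add: Uop_def Dop_def)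
lemma DUD: "Dop (Uop (Dop x)) n = delta (Suc n) * delta (Suc n) * x (Suc n)"
  by (simp add: Uop_def Dop_def)
lemma DUU: "Dop (Uop (Uop x)) n = (if n = 0 then 0 else delta (Suc n) * x (n - 1))"
  by (simp add: Uop_def Dop_def)
lemma UDU: "Uop (Dop (Uop x)) n = (if n = 0 then 0 else delta n * x (n - 1))"
  by (cases n) (simp_all add: Uop_def Dop_def)
lemma UUD: "Uop (Uop (Dop x)) n = (if n = 0 then 0 else delta (n - 1) * x (n - 1))"
  by (cases n; cases "n - 1") (simp_all add: Uop_def Dop_def delta0)

lemma R1: "Dop (Dop (Uop x)) = vsmult (1 + eta) (Dop (Uop (Dop x))) + vsmult (- eta) (Uop (Dop (Dop x))) + vsmult 1 (Dop x)"
proof (rule ext)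
  fix n
  show "Dop (Dop (Uop x)) n = (vsmult (1 + eta) (Dop (Uop (Dop x))) + vsmult (- eta) (Uop (Dop (Dop x))) + vsmult 1 (Dop x)) n"
    unfolding plus_fun_def vsmult_def DDU DUD UDD delta_SS by (simp add: Dop_def algebra_simps)
qed

lemma R2: "Dop (Uop (Uop x)) = vsmult (1 + eta) (Uop (Dop (Uop x))) + vsmult (- eta) (Uop (Uop (Dop x))) + vsmult 1 (Uop x)"
proof (rule ext)
  fix n
  show "Dop (Uop (Uop x)) n = (vsmult (1 + eta) (Uop (Dop (Uop x))) + vsmult (- eta) (Uop (Uop (Dop x))) + vsmult 1 (Uop x)) n"
  proof (cases n)
    case 0 then show ?thesis unfolding plus_fun_def vsmult_def DUU UDU UUD by (simp add: Uop_def)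
  next
    case (Suc m)
    show ?thesis unfolding plus_fun_def vsmult_def DUU UDU UUD using Suc
      by (simp add: Uop_def delta_SS[of m] algebra_simps)
  qed
qed

end



context duc
begin

definition theta :: "nat \<Rightarrow> 'k" where "theta n = tau * eta ^ n"
definition tOp :: "(nat \<Rightarrow> 'k) \<Rightarrow> (nat \<Rightarrow> 'k)" where
  "tOp x = Dop (Uop x) + vsmult (-1) (Uop (Dop x)) + vsmult (- lam) x"

lemma tOp_eq: "tOp x n = theta n * x n"
proof -
  have UD: "Uop (Dop x) n = delta n * x n" by (cases n) (simp_all add: Uop_def Dop_def delta0)
  have DU: "Dop (Uop x) n = delta (Suc n) * x n" by (simp add: Uop_def Dop_def)
  have "delta (Suc n) - delta n - lam = lam * (1 - eta) * tau * eta ^ n"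
    by (simp add: delta_def algebra_simps)
  then have "delta (Suc n) - delta n - lam = theta n" using lam_eq by (simp add: theta_def)
  then show ?thesis unfolding tOp_def plus_fun_def vsmult_def UD DU
    by (simp add: algebra_simps)
qed

definition closed :: "(nat \<Rightarrow> 'k) set \<Rightarrow> bool" where
  "closed W \<longleftrightarrow> is_subspace W \<and> (\<forall>x\<in>W. Dop x \<in> W \<and> Uop x \<in> W)"

lemma closed_add: "closed W \<Longrightarrow> x \<in> W \<Longrightarrow> y \<in> W \<Longrightarrow> x + y \<in> W"
  by (simp add: closed_def is_subspace_def)
lemma closed_smult: "closed W \<Longrightarrow> x \<in> W \<Longrightarrow> vsmult c x \<in> W"
  by (simp add: closed_def is_subspace_def)
lemma closed_D: "closed W \<Longrightarrow> x \<in> W \<Longrightarrow> Dop x \<in> W"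
  by (simp add: closed_def)
lemma closed_U: "closed W \<Longrightarrow> x \<in> W \<Longrightarrow> Uop x \<in> W"
  by (simp add: closed_def)
lemma closed_t: "closed W \<Longrightarrow> x \<in> W \<Longrightarrow> tOp x \<in> W"
  unfolding tOp_def by (intro closed_add closed_smult closed_D closed_U) auto

definition evalF :: "(nat \<times> 'k poly) list \<Rightarrow> nat \<Rightarrow> 'k" where
  "evalF xs n = (\<Sum>(i,p)\<leftarrow>xs. eta ^ (i * n) * poly p (of_nat n))"

definition step :: "'k \<Rightarrow> nat \<Rightarrow> 'k poly \<Rightarrow> 'k poly" where
  "step mu i p = smult (inverse (eta ^ i)) (pcompose p [:-1,1:]) - smult mu p"

definition stepF :: "'k \<Rightarrow> (nat \<times> 'k poly) list \<Rightarrow> (nat \<times> 'k poly) list" where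
  "stepF mu xs = map (\<lambda>(i,p). (i, step mu i p)) xs"

definition dstep :: "(nat \<times> 'k poly) list \<Rightarrow> (nat \<times> 'k poly) list" where
  "dstep xs = map (\<lambda>(i,p). (i, smult (eta ^ i) (pcompose p [:1,1:]) * [:lam * (1 + tau), lam:])) xs
     @ map (\<lambda>(i,p). (Suc i, smult (- (lam * tau * eta * eta ^ i)) (pcompose p [:1,1:]))) xs"

definition smF :: "'k \<Rightarrow> (nat \<times> 'k poly) list \<Rightarrow> (nat \<times> 'k poly) list" where
  "smF c xs = map (\<lambda>(i,p). (i, smult c p)) xs"

lemma evalF_Nil[simp]: "evalF [] n = 0" by (simp add: evalF_def)
lemma evalF_Cons: "evalF ((i,p) # xs) n = eta ^ (i * n) * poly p (of_nat n) + evalF xs n"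
  by (simp add: evalF_def)
lemma evalF_append: "evalF (xs @ ys) n = evalF xs n + evalF ys n"
  by (simp add: evalF_def)
lemma evalF_smF: "evalF (smF c xs) n = c * evalF xs n"
  by (induction xs) (auto simp: smF_def evalF_def algebra_simps)

lemma evalF_stepF:
  assumes "n \<ge> 1"
  shows "evalF (stepF mu xs) n = evalF xs (n - 1) - mu * evalF xs n"
proof (induction xs)
  case Nil then show ?case by (simp add: stepF_def)
next
  case (Cons a xs)
  obtain i p where a: "a = (i,p)" by fastforce
  have e: "eta ^ (i * n) * inverse (eta ^ i) = eta ^ (i * (n - 1))"
  proof -
    have "eta ^ (i * n) = eta ^ (i * (n - 1)) * eta ^ i"
      using assms by (metis Suc_diff_1 less_le_trans mult_Suc_right power_add zero_less_one mult.commute)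
    then show ?thesis using eta_nz by simp
  qed
  have o: "(of_nat n :: 'k) - 1 = of_nat (n - 1)" using assms by (simp add: of_nat_diff)
  have "eta ^ (i * n) * poly (step mu i p) (of_nat n)
      = eta ^ (i * (n - 1)) * poly p (of_nat (n - 1)) - mu * (eta ^ (i * n) * poly p (of_nat n))"
    unfolding step_def using e o by (simp add: poly_pcompose algebra_simps)
  then have t1: "eta ^ (i * n) * poly (step mu i p) (of_nat n)
      = eta ^ (i * (n - 1)) * poly p (of_nat (n - 1)) - mu * (eta ^ (i * n) * poly p (of_nat n))" .
  have "evalF (stepF mu (a # xs)) n = eta ^ (i * n) * poly (step mu i p) (of_nat n) + evalF (stepF mu xs) n"
    by (simp add: stepF_def a evalF_Cons)
  also have "\<dots> = (eta ^ (i * (n - 1)) * poly p (of_nat (n - 1)) + evalF xs (n - 1))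
      - mu * (eta ^ (i * n) * poly p (of_nat n) + evalF xs n)"
    unfolding t1 Cons.IH by (simp add: algebra_simps)
  also have "\<dots> = evalF (a # xs) (n - 1) - mu * evalF (a # xs) n" by (simp add: a evalF_Cons)
  finally show ?case .
qed

lemma evalF_dstep: "evalF (dstep xs) n = delta (Suc n) * evalF xs (Suc n)"
proof (induction xs)
  case Nil then show ?case by (simp add: dstep_def)
next
  case (Cons a xs)
  obtain i p where a: "a = (i,p)" by fastforce
  have e1: "eta ^ (i * Suc n) = eta ^ (i * n) * eta ^ i" by (simp add: power_add mult.commute)
  have e2: "eta ^ (Suc i * n) = eta ^ (i * n) * eta ^ n" by (simp add: power_add mult.commute)
  have "eta ^ (i * n) * poly (smult (eta ^ i) (pcompose p [:1,1:]) * [:lam * (1 + tau), lam:]) (of_nat n)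
       + eta ^ (Suc i * n) * poly (smult (- (lam * tau * eta * eta ^ i)) (pcompose p [:1,1:])) (of_nat n)
      = delta (Suc n) * (eta ^ (i * Suc n) * poly p (of_nat (Suc n)))"
    unfolding e1 e2 delta_def by (simp add: poly_pcompose algebra_simps)
  then have "evalF (dstep (a # xs)) n = delta (Suc n) * (eta ^ (i * Suc n) * poly p (of_nat (Suc n))) + evalF (dstep xs) n"
    by (simp add: dstep_def a evalF_def algebra_simps)
  then show ?case using Cons by (simp add: a evalF_Cons algebra_simps)
qed

definition Mset :: "nat \<Rightarrow> (nat \<Rightarrow> 'k) set" where
  "Mset m = {g. \<exists>xs N. (\<forall>ip\<in>set xs. m \<le> fst ip) \<and> (\<forall>n\<ge>N. g n = evalF xs n)}"

lemma Mset_closed: "closed (Mset m)"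
  unfolding closed_def is_subspace_def
proof (intro conjI ballI allI)
  show "0 \<in> Mset m" unfolding Mset_def by (rule CollectI, rule exI[of _ "[]"]) simp
next
  fix x y assume x: "x \<in> Mset m" and y: "y \<in> Mset m"
  obtain xs N where xs: "\<forall>ip\<in>set xs. m \<le> fst ip" "\<forall>n\<ge>N. x n = evalF xs n" using x by (auto simp: Mset_def)
  obtain ys N' where ys: "\<forall>ip\<in>set ys. m \<le> fst ip" "\<forall>n\<ge>N'. y n = evalF ys n" using y by (auto simp: Mset_def)
  show "x + y \<in> Mset m" unfolding Mset_def
    by (rule CollectI, rule exI[of _ "xs @ ys"], rule exI[of _ "max N N'"]) (use xs ys in \<open>auto simp: evalF_append\<close>)
next
  fix c x assume x: "x \<in> Mset m"
  obtain xs N where xs: "\<forall>ip\<in>set xs. m \<le> fst ip" "\<forall>n\<ge>N. x n = evalF xs n" using x by (auto simp: Mset_def)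
  show "vsmult c x \<in> Mset m" unfolding Mset_def
  proof (rule CollectI, rule exI[of _ "smF c xs"], rule exI[of _ N], intro conjI)
    show "\<forall>ip\<in>set (smF c xs). m \<le> fst ip" using xs(1) by (auto simp: smF_def)
    show "\<forall>n\<ge>N. vsmult c x n = evalF (smF c xs) n" using xs(2) by (simp add: evalF_smF vsmult_def)
  qed
next
  fix x assume x: "x \<in> Mset m"
  obtain xs N where xs: "\<forall>ip\<in>set xs. m \<le> fst ip" "\<forall>n\<ge>N. x n = evalF xs n" using x by (auto simp: Mset_def)
  show "Dop x \<in> Mset m" unfolding Mset_def
  proof (rule CollectI, rule exI[of _ "dstep xs"], rule exI[of _ N], intro conjI)
    show "\<forall>ip\<in>set (dstep xs). m \<le> fst ip" using xs(1) by (auto simp: dstep_def)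
    show "\<forall>n\<ge>N. Dop x n = evalF (dstep xs) n" using xs(2) by (simp add: evalF_dstep Dop_def)
  qed
  show "Uop x \<in> Mset m" unfolding Mset_def
  proof (rule CollectI, rule exI[of _ "stepF 0 xs"], rule exI[of _ "Suc N"], intro conjI)
    show "\<forall>ip\<in>set (stepF 0 xs). m \<le> fst ip" using xs(1) by (auto simp: stepF_def)
    show "\<forall>n\<ge>Suc N. Uop x n = evalF (stepF 0 xs) n" using xs(2) by (simp add: evalF_stepF Uop_def)
  qed
qed

end



context duc
begin

fun applyL :: "'k list \<Rightarrow> (nat \<Rightarrow> 'k) \<Rightarrow> (nat \<Rightarrow> 'k)" where
  "applyL [] g = g"
| "applyL (mu # L) g = applyL L (Uop g + vsmult (- mu) g)"

definition stepsF :: "'k list \<Rightarrow> (nat \<times> 'k poly) list \<Rightarrow> (nat \<times> 'k poly) list" where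
  "stepsF L xs = foldl (\<lambda>xs mu. stepF mu xs) xs L"

definition steps :: "'k list \<Rightarrow> nat \<Rightarrow> 'k poly \<Rightarrow> 'k poly" where
  "steps L i p = foldl (\<lambda>p mu. step mu i p) p L"

lemma track:
  assumes "\<forall>n\<ge>N. g n = evalF xs n"
  shows "\<forall>n\<ge>N + length L. applyL L g n = evalF (stepsF L xs) n"
  using assms
proof (induction L arbitrary: g xs N)
  case Nil then show ?case by (simp add: stepsF_def)
next
  case (Cons mu L)
  have "\<forall>n\<ge>Suc N. (Uop g + vsmult (- mu) g) n = evalF (stepF mu xs) n"
  proof (intro allI impI)
    fix n assume n: "Suc N \<le> n"
    then have "(Uop g + vsmult (- mu) g) n = g (n - 1) - mu * g n"
      by (simp add: Uop_def vsmult_def)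
    also have "\<dots> = evalF xs (n - 1) - mu * evalF xs n" using Cons.prems n by simp
    also have "\<dots> = evalF (stepF mu xs) n" using n by (simp add: evalF_stepF)
    finally show "(Uop g + vsmult (- mu) g) n = evalF (stepF mu xs) n" .
  qed
  from Cons.IH[OF this] have "\<forall>n\<ge>Suc N + length L. applyL L (Uop g + vsmult (- mu) g) n = evalF (stepsF L (stepF mu xs)) n" .
  moreover have "applyL (mu # L) g = applyL L (Uop g + vsmult (- mu) g)" by simp
  moreover have "stepsF (mu # L) xs = stepsF L (stepF mu xs)" by (simp add: stepsF_def)
  ultimately show ?case by simp
qed

lemma stepsF_eq: "stepsF L xs = map (\<lambda>(i,p). (i, steps L i p)) xs"
proof (induction L arbitrary: xs)
  case Nil then show ?case by (simp add: stepsF_def steps_def case_prod_beta)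
next
  case (Cons mu L)
  have "stepsF (mu # L) xs = stepsF L (stepF mu xs)" by (simp add: stepsF_def)
  also have "\<dots> = map (\<lambda>(i,p). (i, steps L i p)) (stepF mu xs)" by (rule Cons.IH)
  also have "\<dots> = map (\<lambda>(i,p). (i, steps (mu # L) i p)) xs"
    by (simp add: stepF_def steps_def case_prod_beta)
  finally show ?case .
qed

lemma deg_diff_shift:
  fixes p :: "'k poly"
  assumes "degree p > 0"
  shows "degree (pcompose p [:-1,1:] - p) < degree p"
proof (cases "pcompose p [:-1,1:] - p = 0")
  case True then show ?thesis using assms by simp
next
  case False
  have dq: "degree (pcompose p [:-1,(1::'k):]) = degree p" by (simp add: degree_pcompose)
  have lc: "lead_coeff (pcompose p [:-1,(1::'k):]) = lead_coeff p"
    by (subst lead_coeff_comp) simp_all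
  show ?thesis
  proof (rule degree_less_if_less_eqI)
    show "degree (pcompose p [:-1,1:] - p) \<le> degree p" using dq by (simp add: degree_diff_le)
    show "coeff (pcompose p [:- 1, 1:] - p) (degree p) = 0" using lc dq by simp
    show "pcompose p [:- 1, 1:] - p \<noteq> 0" by fact
  qed
qed

lemma deg_step_le: "degree (step mu i p) \<le> degree p"
  unfolding step_def
  by (rule degree_diff_le) (simp_all add: degree_pcompose)

lemma step_self: "step (inverse (eta ^ i)) i p = smult (inverse (eta ^ i)) (pcompose p [:-1,1:] - p)"
  by (simp add: step_def smult_diff_right)

lemma steps_Cons: "steps (mu # L) i p = steps L i (step mu i p)"
  by (simp add: steps_def)

lemma step_zero[simp]: "step mu i 0 = 0" by (simp add: step_def)

lemma steps_zero: "steps L i 0 = 0"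
  by (induction L) (simp_all add: steps_def)

lemma steps_kill:
  assumes "p = 0 \<or> degree p < count_list L (inverse (eta ^ i))"
  shows "steps L i p = 0"
  using assms
proof (induction L arbitrary: p)
  case Nil then show ?case by (simp add: steps_def)
next
  case (Cons mu L)
  show ?case
  proof (cases "p = 0")
    case True then show ?thesis by (simp add: steps_zero)
  next
    case pnz: False
    then have dl: "degree p < count_list (mu # L) (inverse (eta ^ i))" using Cons.prems by simp
    show ?thesis
    proof (cases "mu = inverse (eta ^ i)")
      case True
      have cnt: "count_list (mu # L) (inverse (eta ^ i)) = Suc (count_list L (inverse (eta ^ i)))"
        using True by simp
      have "step mu i p = 0 \<or> degree (step mu i p) < count_list L (inverse (eta ^ i))"
      proof (cases "degree p = 0")
        case True
        then obtain c where "p = [:c:]" by (metis degree_eq_zeroE)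
        then have "step mu i p = 0" using \<open>mu = _\<close> by (simp add: step_self)
        then show ?thesis by simp
      next
        case False
        have "degree (step mu i p) \<le> degree (pcompose p [:-1,1:] - p)"
          using \<open>mu = _\<close> by (simp add: step_self)
        also have "\<dots> < degree p" using False deg_diff_shift by simp
        finally show ?thesis using dl cnt by simp
      qed
      then show ?thesis using Cons.IH by (simp add: steps_Cons)
    next
      case False
      have "degree (step mu i p) < count_list L (inverse (eta ^ i))"
        using dl False deg_step_le[of mu i p] by simp
      then show ?thesis using Cons.IH by (simp add: steps_Cons)
    qed
  qed
qed

lemma count_rep: "count_list (replicate n x) x = n"
  by (induction n) simp_all

definition kill :: "(nat \<times> 'k poly) list \<Rightarrow> 'k list" where
  "kill xs = concat (map (\<lambda>(i,p). replicate (Suc (degree p)) (inverse (eta ^ i))) xs)"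

lemma kill_count:
  assumes "(i,p) \<in> set xs"
  shows "Suc (degree p) \<le> count_list (kill xs) (inverse (eta ^ i))"
  using assms
proof (induction xs)
  case Nil then show ?case by simp
next
  case (Cons a xs)
  obtain j q where a: "a = (j,q)" by fastforce
  have k: "kill (a # xs) = replicate (Suc (degree q)) (inverse (eta ^ j)) @ kill xs"
    by (simp add: kill_def a)
  show ?case
  proof (cases "(i,p) = a")
    case True then show ?thesis using a k by (simp add: count_list_append count_rep del: replicate_Suc)
  next
    case False then have "(i,p) \<in> set xs" using Cons.prems by simp
    then show ?thesis using Cons.IH k by (simp add: count_list_append)
  qed
qed

lemma evalF_map0:
  "\<forall>ip\<in>set xs. steps L (fst ip) (snd ip) = 0 \<Longrightarrow> evalF (map (\<lambda>(i,p). (i, steps L i p)) xs) n = 0"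
proof (induction xs)
  case Nil then show ?case by simp
next
  case (Cons a xs)
  obtain i p where a: "a = (i,p)" by fastforce
  then show ?case using Cons by (simp add: evalF_Cons)
qed

lemma evalF_kill: "evalF (stepsF (kill xs) xs) n = 0"
proof -
  have "\<forall>ip\<in>set xs. steps (kill xs) (fst ip) (snd ip) = 0"
  proof
    fix ip assume "ip \<in> set xs"
    then obtain i p where ip: "ip = (i,p)" "(i,p) \<in> set xs" by (metis prod.collapse)
    show "steps (kill xs) (fst ip) (snd ip) = 0"
      using kill_count[OF ip(2)] ip(1) by (intro steps_kill) simp
  qed
  then show ?thesis unfolding stepsF_eq by (rule evalF_map0)
qed

lemma kill_elems: "mu \<in> set (kill xs) \<Longrightarrow> \<exists>ip\<in>set xs. mu = inverse (eta ^ fst ip)"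
  by (force simp: kill_def)

lemma applyL_closed: "closed W \<Longrightarrow> g \<in> W \<Longrightarrow> applyL L g \<in> W"
  by (induction L arbitrary: g) (simp_all add: closed_add closed_smult closed_U)

lemma applyL_inj:
  assumes "\<forall>mu\<in>set L. mu \<noteq> 0" and "applyL L g = 0"
  shows "g = 0"
  using assms
proof (induction L arbitrary: g)
  case Nil then show ?case by simp
next
  case (Cons mu L)
  have a1: "\<forall>mu\<in>set L. mu \<noteq> 0" using Cons.prems by simp
  have a2: "applyL L (Uop g + vsmult (- mu) g) = 0" using Cons.prems(2) by (simp add: zero_fun_def)
  have h: "Uop g + vsmult (- mu) g = 0" by (rule Cons.IH[OF a1 a2])
  have mu: "mu \<noteq> 0" using Cons.prems by simp
  have "\<forall>n. g n = 0"
  proof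
    fix n show "g n = 0"
    proof (induction n)
      case 0
      have "(Uop g + vsmult (- mu) g) 0 = 0" using h by simp
      then show ?case using mu by (simp add: Uop_def vsmult_def)
    next
      case (Suc n)
      have "(Uop g + vsmult (- mu) g) (Suc n) = 0" using h by simp
      then show ?case using mu Suc by (simp add: Uop_def vsmult_def)
    qed
  qed
  then show ?case by auto
qed

end



context duc
begin

definition ev :: "nat \<Rightarrow> nat \<Rightarrow> 'k" where "ev k = (\<lambda>n. if n = k then 1 else 0)"

lemma lam_nz: "lam \<noteq> 0" using lam_eq by auto

lemma delta_nz: "delta (Suc k) \<noteq> 0"
  using dnz lam_nz unfolding delta_def by (metis le_add1 mult_eq_0_iff plus_1_eq_Suc)

lemma D_ev: "Dop (ev (Suc k)) = vsmult (delta (Suc k)) (ev k)"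
  by (rule ext) (simp add: Dop_def ev_def vsmult_def)

lemma smult_inv: "c \<noteq> 0 \<Longrightarrow> vsmult (inverse c) (vsmult c x) = x"
  by (rule ext) (simp add: vsmult_def)

lemma desc: "closed W \<Longrightarrow> ev k \<in> W \<Longrightarrow> ev 0 \<in> W"
proof (induction k)
  case 0 then show ?case by simp
next
  case (Suc k)
  have "Dop (ev (Suc k)) \<in> W" using Suc.prems closed_D by blast
  then have "vsmult (inverse (delta (Suc k))) (Dop (ev (Suc k))) \<in> W" using Suc.prems closed_smult by blast
  then have "ev k \<in> W" unfolding D_ev using smult_inv[OF delta_nz] by simp
  then show ?case using Suc by blast
qed

lemma pow_inj: "eta ^ a = eta ^ b \<Longrightarrow> a = b"
proof (rule ccontr)
  assume h: "eta ^ a = eta ^ b" "a \<noteq> b"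
  have key: "\<And>a b. a < b \<Longrightarrow> eta ^ a = eta ^ b \<Longrightarrow> False"
  proof -
    fix a b :: nat assume ab: "a < b" "eta ^ a = eta ^ b"
    have "eta ^ b = eta ^ a * eta ^ (b - a)" using ab(1) by (simp add: power_add[symmetric])
    then have "eta ^ (b - a) = 1" using ab(2) eta_nz by simp
    then show False using eta_nru ab(1) by simp
  qed
  show False using h key by (metis linorder_neqE_nat)
qed

lemma theta_inj: "theta a = theta b \<Longrightarrow> a = b"
  using tau_nz pow_inj by (simp add: theta_def)

lemma caseA:
  assumes "closed W" "g \<in> W" "finite {n. g n \<noteq> 0}" "g \<noteq> 0"
  shows "ev 0 \<in> W"
  using assms
proof (induction "card {n. g n \<noteq> 0}" arbitrary: g rule: less_induct)
  case less
  let ?S = "{n. g n \<noteq> 0}"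
  have "\<exists>k. g k \<noteq> 0"
  proof (rule ccontr)
    assume "\<not> (\<exists>k. g k \<noteq> 0)"
    then have "g = 0" by (simp add: fun_eq_iff)
    then show False using less.prems(4) by simp
  qed
  then obtain k0 where k0: "g k0 \<noteq> 0" by blast
  show ?case
  proof (cases "?S = {k0}")
    case True
    have "g = vsmult (g k0) (ev k0)"
    proof (rule ext)
      fix n show "g n = vsmult (g k0) (ev k0) n"
        using True by (cases "n = k0") (auto simp: vsmult_def ev_def)
    qed
    then have "ev k0 = vsmult (inverse (g k0)) g" using smult_inv[OF k0] by metis
    then have "ev k0 \<in> W" using less.prems closed_smult by metis
    then show ?thesis using desc less.prems by blast
  next
    case False
    then obtain k1 where k1: "g k1 \<noteq> 0" "k1 \<noteq> k0" using k0 by blast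
    define g' where "g' = tOp g + vsmult (- theta k1) g"
    have g'n: "g' n = (theta n - theta k1) * g n" for n
      by (simp add: g'_def tOp_eq vsmult_def algebra_simps)
    have tne: "theta n - theta k1 \<noteq> 0 \<longleftrightarrow> n \<noteq> k1" for n
    proof
      assume "theta n - theta k1 \<noteq> 0" then show "n \<noteq> k1" by auto
    next
      assume "n \<noteq> k1" then show "theta n - theta k1 \<noteq> 0" using theta_inj[of n k1] by auto
    qed
    have S': "{n. g' n \<noteq> 0} = ?S - {k1}"
      unfolding set_eq_iff g'n using tne by (simp add: conj_commute)
    have "g' \<in> W" unfolding g'_def using less.prems by (intro closed_add closed_smult closed_t)
    moreover have "card {n. g' n \<noteq> 0} < card ?S"
      unfolding S' by (rule card_Diff1_less) (use less.prems(3) k1(1) in auto)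
    moreover have "finite {n. g' n \<noteq> 0}" unfolding S' using less.prems(3) by simp
    moreover have "g' \<noteq> 0"
    proof
      assume "g' = 0"
      then have "g' k0 = 0" by simp
      then show False using g'n[of k0] k0 k1(2) tne[of k0] by simp
    qed
    ultimately show ?thesis using less.hyps less.prems(1) by blast
  qed
qed

lemma key:
  assumes "closed W" "W \<subseteq> Mset 0" "g \<in> W" "g \<noteq> 0"
  shows "ev 0 \<in> W"
proof -
  obtain xs N where xs: "\<forall>n\<ge>N. g n = evalF xs n" using assms(2,3) by (auto simp: Mset_def)
  define L where "L = kill xs"
  define g' where "g' = applyL L g"
  have "g' \<in> W" unfolding g'_def using assms applyL_closed by blast
  have z: "\<forall>n\<ge>N + length L. g' n = 0"
    using track[OF xs, of L] evalF_kill unfolding g'_def L_def by simp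
  have fin: "finite {n. g' n \<noteq> 0}"
  proof (rule finite_subset[of _ "{..<N + length L}"])
    show "{n. g' n \<noteq> 0} \<subseteq> {..<N + length L}"
    proof
      fix n assume "n \<in> {n. g' n \<noteq> 0}"
      then have "\<not> (N + length L \<le> n)" using z by auto
      then show "n \<in> {..<N + length L}" by simp
    qed
  qed simp
  have nz: "\<forall>mu\<in>set L. mu \<noteq> 0" unfolding L_def using kill_elems eta_nz by fastforce
  have "g' \<noteq> 0" using applyL_inj[OF nz] assms(4) unfolding g'_def by blast
  then show ?thesis using caseA[OF assms(1) \<open>g' \<in> W\<close> fin] by blast
qed

end



lemma exists_q:
  fixes eta :: "'k::field_char_0"
  assumes enz: "eta \<noteq> 0" and enru: "\<forall>n::nat. n > 0 \<longrightarrow> eta ^ n \<noteq> 1"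
  shows "\<exists>q::nat. q \<ge> 2 \<and> (\<forall>k::nat. k \<ge> 1 \<longrightarrow> eta ^ k \<noteq> of_nat (q * k + 1))"
proof (cases "\<exists>j::nat. j \<ge> 1 \<and> (\<exists>m0::int. eta ^ j = of_int m0)")
  case True
  then obtain j m0 where j: "j \<ge> 1" and m0: "eta ^ j = of_int m0" by blast
  have m0nz: "m0 \<noteq> 0" using m0 enz by (metis of_int_0 power_not_zero)
  have m0n1: "m0 \<noteq> 1" using m0 enru j by fastforce
  have m0nm1: "m0 \<noteq> -1"
  proof
    assume "m0 = -1"
    then have "eta ^ (2 * j) = 1" using m0 by (simp add: power_mult_distrib power_mult mult.commute)
    then show False using enru j by simp
  qed
  define q where "q = nat \<bar>m0\<bar>"
  have q2: "q \<ge> 2" using m0nz m0n1 m0nm1 unfolding q_def by linarith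
  have qdvd: "int q dvd m0" unfolding q_def by simp
  have "\<forall>k::nat. k \<ge> 1 \<longrightarrow> eta ^ k \<noteq> of_nat (q * k + 1)"
  proof (intro allI impI notI)
    fix k :: nat assume k: "k \<ge> 1" and e: "eta ^ k = of_nat (q * k + 1)"
    have A: "eta ^ (k * j) = of_nat ((q * k + 1) ^ j)" using e by (simp add: power_mult)
    have B: "eta ^ (j * k) = of_int (m0 ^ k)" using m0 by (simp add: power_mult)
    have "eta ^ (k * j) = of_nat ((q * k + 1) ^ j)" by (rule A)
    moreover have "eta ^ (k * j) = of_int (m0 ^ k)" using B by (simp add: mult.commute)
    ultimately have "(of_int (int ((q * k + 1) ^ j)) :: 'k) = of_int (m0 ^ k)" by simp
    then have eq: "int ((q * k + 1) ^ j) = m0 ^ k" using of_int_eq_iff by blast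
    have "int q dvd m0 ^ k" using qdvd k by (simp add: dvd_power_iff_le dvd_trans[OF qdvd] dvd_power[of k]) 
    then have "int q dvd int ((q * k + 1) ^ j)" using eq by simp
    then have d: "q dvd (q * k + 1) ^ j" by (simp only: int_dvd_int_iff)
    have "(q * k + 1) ^ j mod q = ((q * k + 1) mod q) ^ j mod q" by (simp add: power_mod)
    also have "(q * k + 1) mod q = 1"
    proof -
      have "(1 + q * k) mod q = 1 mod q" by (rule mod_mult_self2)
      then show ?thesis using q2 by (simp add: add.commute)
    qed
    finally have "(q * k + 1) ^ j mod q = 1" using q2 by simp
    then show False using d q2 by simp
  qed
  then show ?thesis using q2 by blast
next
  case False
  have "\<forall>k::nat. k \<ge> 1 \<longrightarrow> eta ^ k \<noteq> of_nat (2 * k + 1)"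
  proof (intro allI impI notI)
    fix k :: nat assume k: "k \<ge> 1" and e: "eta ^ k = of_nat (2 * k + 1)"
    then have "eta ^ k = of_int (int (2 * k + 1))" by simp
    then show False using False k by blast
  qed
  then show ?thesis by (intro exI[of _ 2]) simp
qed

context duc
begin

definition hh :: "nat \<Rightarrow> 'k" where "hh = (\<lambda>n. 1)"
definition VV :: "(nat \<Rightarrow> 'k) set" where "VV = \<Inter>{W. closed W \<and> hh \<in> W}"

lemma closed_Inter: "\<forall>W\<in>F. closed W \<Longrightarrow> closed (\<Inter>F)"
  unfolding closed_def is_subspace_def by (simp add: Inter_iff)

lemma closed_Int: "closed A \<Longrightarrow> closed B \<Longrightarrow> closed (A \<inter> B)"
  unfolding closed_def is_subspace_def by simp

lemma sub_closed: "submodule VV Dop Uop W \<Longrightarrow> closed W"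
  unfolding submodule_def closed_def by simp
lemma closed_sub: "closed W \<Longrightarrow> W \<subseteq> VV \<Longrightarrow> submodule VV Dop Uop W"
  unfolding submodule_def closed_def by simp

lemma VV_closed: "closed VV" unfolding VV_def by (rule closed_Inter) blast
lemma hh_VV: "hh \<in> VV" unfolding VV_def by blast
lemma VV_least: "closed W \<Longrightarrow> hh \<in> W \<Longrightarrow> VV \<subseteq> W" unfolding VV_def by blast

lemma hh_M: "hh \<in> Mset 0"
  unfolding Mset_def hh_def
  by (rule CollectI, rule exI[of _ "[(0, 1)]"], rule exI[of _ 0]) (simp add: evalF_Cons)

lemma VV_M: "VV \<subseteq> Mset 0"
  by (rule VV_least[OF Mset_closed hh_M])

lemma hh_nz: "hh \<noteq> 0" by (simp add: hh_def fun_eq_iff)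

lemma ev0_VV: "ev 0 \<in> VV" using key[OF VV_closed VV_M hh_VV hh_nz] .

lemma ev0_nz: "ev 0 \<noteq> 0" by (simp add: ev_def fun_eq_iff)

definition ww :: "nat \<Rightarrow> nat \<Rightarrow> 'k" where "ww m = (\<lambda>n. (theta n) ^ m)"

lemma ww_VV: "ww m \<in> VV"
proof (induction m)
  case 0 then show ?case using hh_VV by (simp add: ww_def hh_def)
next
  case (Suc m)
  have "ww (Suc m) = tOp (ww m)" by (rule ext) (simp add: ww_def tOp_eq)
  then show ?case using closed_t[OF VV_closed Suc] by simp
qed

lemma ww_form: "ww m n = evalF [(m, [:tau ^ m:])] n"
  by (simp add: ww_def evalF_Cons theta_def power_mult_distrib mult.commute[of m n] power_mult)

lemma ww_M: "ww m \<in> Mset m"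
  unfolding Mset_def
  by (rule CollectI, rule exI[of _ "[(m, [:tau ^ m:])]"], rule exI[of _ 0]) (simp add: ww_form)

lemma steps_const: "steps L m [:c:] = [:c * prod_list (map (\<lambda>mu. inverse (eta ^ m) - mu) L):]"
proof (induction L arbitrary: c)
  case Nil then show ?case by (simp add: steps_def)
next
  case (Cons mu L)
  have "step mu m [:c:] = [:(inverse (eta ^ m) - mu) * c:]"
    by (simp add: step_def algebra_simps)
  then show ?case using Cons by (simp add: steps_Cons algebra_simps)
qed

lemma ww_notM: "ww m \<notin> Mset (Suc m)"
proof
  assume "ww m \<in> Mset (Suc m)"
  then obtain xs N where xs1: "\<forall>ip\<in>set xs. Suc m \<le> fst ip" and xs2: "\<forall>n\<ge>N. ww m n = evalF xs n"
    by (auto simp: Mset_def)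
  define L where "L = kill xs"
  have a: "\<forall>n\<ge>N + length L. applyL L (ww m) n = 0"
    using track[OF xs2, of L] evalF_kill unfolding L_def by simp
  have b: "\<forall>n\<ge>0 + length L. applyL L (ww m) n = evalF (stepsF L [(m, [:tau ^ m:])]) n"
    by (rule track) (simp add: ww_form)
  define n where "n = N + length L"
  have "evalF (stepsF L [(m, [:tau ^ m:])]) n = 0" using a b unfolding n_def by simp
  then have z: "eta ^ (m * n) * (tau ^ m * prod_list (map (\<lambda>mu. inverse (eta ^ m) - mu) L)) = 0"
    by (simp add: stepsF_eq evalF_Cons steps_const)
  have "prod_list (map (\<lambda>mu. inverse (eta ^ m) - mu) L) \<noteq> 0"
  proof
    assume "prod_list (map (\<lambda>mu. inverse (eta ^ m) - mu) L) = 0"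
    then obtain mu where mu: "mu \<in> set L" "inverse (eta ^ m) = mu" by (auto simp: prod_list_zero_iff)
    then obtain ip where ip: "ip \<in> set xs" "mu = inverse (eta ^ fst ip)"
      using kill_elems unfolding L_def by blast
    then have "eta ^ m = eta ^ fst ip" using mu by simp
    then have "m = fst ip" by (rule pow_inj)
    then show False using xs1 ip by fastforce
  qed
  then show False using z eta_nz tau_nz by simp
qed

definition FF :: "nat \<Rightarrow> (nat \<Rightarrow> 'k) set" where "FF m = VV \<inter> Mset m"

lemma Mset_mono: "Mset (Suc m) \<subseteq> Mset m"
proof
  fix g assume "g \<in> Mset (Suc m)"
  then obtain xs N where "\<forall>ip\<in>set xs. Suc m \<le> fst ip" "\<forall>n\<ge>N. g n = evalF xs n"
    unfolding Mset_def by blast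
  then have "\<forall>ip\<in>set xs. m \<le> fst ip" "\<forall>n\<ge>N. g n = evalF xs n" by auto
  then show "g \<in> Mset m" unfolding Mset_def by blast
qed

lemma not_artinian: "\<not> artinian_mod VV Dop Uop"
proof
  assume art: "artinian_mod VV Dop Uop"
  have sub: "\<forall>n. submodule VV Dop Uop (FF n)"
  proof
    fix n
    have c: "closed (FF n)" unfolding FF_def by (intro closed_Int VV_closed Mset_closed)
    then show "submodule VV Dop Uop (FF n)" by (rule closed_sub) (auto simp: FF_def)
  qed
  have dec: "\<forall>n. FF (Suc n) \<subseteq> FF n"
  proof
    fix n show "FF (Suc n) \<subseteq> FF n" using Mset_mono[of n] unfolding FF_def by (rule Int_mono[OF order_refl])
  qed
  have "(\<forall>n. submodule VV Dop Uop (FF n)) \<and> (\<forall>n. FF (Suc n) \<subseteq> FF n) \<longrightarrow> (\<exists>N. \<forall>n\<ge>N. FF n = FF N)"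
    using art unfolding artinian_mod_def by (rule allE)
  then have "\<exists>N. \<forall>n\<ge>N. FF n = FF N" using sub dec by (rule mp[OF _ conjI])
  then obtain N where N: "\<forall>n\<ge>N. FF n = FF N" ..
  have "FF (Suc N) = FF N" using N[rule_format, of "Suc N"] by linarith
  moreover have "ww N \<in> FF N" unfolding FF_def using ww_VV ww_M by simp
  moreover have "ww N \<notin> FF (Suc N)" unfolding FF_def using ww_notM by simp
  ultimately show False by simp
qed

lemma monolithic: "monolithic_mod VV Dop Uop"
proof -
  have "ev 0 \<in> VV \<inter> \<Inter>{W. submodule VV Dop Uop W \<and> W \<noteq> {0}}"
  proof (intro IntI InterI)
    show "ev 0 \<in> VV" by (rule ev0_VV)
  next
    fix W assume "W \<in> {W. submodule VV Dop Uop W \<and> W \<noteq> {0}}"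
    then have W: "submodule VV Dop Uop W" "W \<noteq> {0}" by simp_all
    have cW: "closed W" using W(1) by (rule sub_closed)
    have "W \<subseteq> VV" using W(1) unfolding submodule_def by simp
    then have WV: "W \<subseteq> Mset 0" using VV_M by (rule order_trans)
    have "0 \<in> W" using cW unfolding closed_def is_subspace_def by simp
    have "\<exists>g\<in>W. g \<noteq> 0"
    proof (rule ccontr)
      assume "\<not> (\<exists>g\<in>W. g \<noteq> 0)"
      then have "W \<subseteq> {0}" by auto
      then show False using W(2) \<open>0 \<in> W\<close> by auto
    qed
    then obtain g where "g \<in> W" "g \<noteq> 0" by blast
    then show "ev 0 \<in> W" using key[OF cW WV] by simp
  qed
  then show ?thesis unfolding monolithic_mod_def using ev0_nz by (metis singletonD)
qed

lemma fg: "finitely_generated_mod VV Dop Uop"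
  unfolding finitely_generated_mod_def
proof (intro exI[of _ "{hh}"] conjI)
  show "finite {hh}" by simp
  show "{hh} \<subseteq> VV" using hh_VV by simp
  show "VV = \<Inter>{W. submodule VV Dop Uop W \<and> {hh} \<subseteq> W}"
  proof
    show "VV \<subseteq> \<Inter>{W. submodule VV Dop Uop W \<and> {hh} \<subseteq> W}"
    proof (rule Inter_greatest)
      fix W assume "W \<in> {W. submodule VV Dop Uop W \<and> {hh} \<subseteq> W}"
      then have "closed W" "hh \<in> W" using sub_closed by auto
      then show "VV \<subseteq> W" by (rule VV_least)
    qed
    show "\<Inter>{W. submodule VV Dop Uop W \<and> {hh} \<subseteq> W} \<subseteq> VV"
    proof -
      have "submodule VV Dop Uop VV" using VV_closed by (rule closed_sub) simp
      then have "VV \<in> {W. submodule VV Dop Uop W \<and> {hh} \<subseteq> W}" using hh_VV by simp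
      then show ?thesis by (rule Inter_lower)
    qed
  qed
qed

lemma dumod: "downup_module (1 + eta) (- eta) 1 VV Dop Uop"
  unfolding downup_module_def
proof (intro conjI)
  show "is_subspace VV" using VV_closed closed_def by simp
  show "\<forall>x\<in>VV. Dop x \<in> VV \<and> Uop x \<in> VV" using VV_closed closed_D closed_U by simp
  show "\<forall>x\<in>VV. \<forall>y\<in>VV. Dop (x + y) = Dop x + Dop y \<and> Uop (x + y) = Uop x + Uop y"
    by (simp add: fun_eq_iff Dop_def Uop_def algebra_simps)
  show "\<forall>c. \<forall>x\<in>VV. Dop (vsmult c x) = vsmult c (Dop x) \<and> Uop (vsmult c x) = vsmult c (Uop x)"
    by (simp add: fun_eq_iff Dop_def Uop_def vsmult_def algebra_simps)
  show "\<forall>x\<in>VV. Dop (Dop (Uop x)) = vsmult (1 + eta) (Dop (Uop (Dop x))) + vsmult (- eta) (Uop (Dop (Dop x))) + vsmult 1 (Dop x)"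
    using R1 by blast
  show "\<forall>x\<in>VV. Dop (Uop (Uop x)) = vsmult (1 + eta) (Uop (Dop (Uop x))) + vsmult (- eta) (Uop (Uop (Dop x))) + vsmult 1 (Uop x)"
    using R2 by blast
qed

end

theorem theorem4p2:
  fixes \<eta> :: "'k::field_char_0"
  assumes "\<eta> \<noteq> 0"
    and "\<forall>n::nat. n > 0 \<longrightarrow> \<eta> ^ n \<noteq> 1"
  shows "\<exists>V D U. downup_module (1 + \<eta>) (- \<eta>) 1 V D U \<and> finitely_generated_mod V D U
            \<and> monolithic_mod V D U \<and> \<not> artinian_mod V D U"
proof -
  obtain q :: nat where q: "q \<ge> 2" "\<forall>k::nat. k \<ge> 1 \<longrightarrow> \<eta> ^ k \<noteq> of_nat (q * k + 1)"
    using exists_q[OF assms] by blast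
  define tau :: 'k where "tau = 1 / of_nat q"
  have qnz: "(of_nat q :: 'k) \<noteq> 0" using q(1) by simp
  have "duc \<eta> tau"
  proof
    show "\<eta> \<noteq> 0" by fact
    show "\<forall>n::nat. n > 0 \<longrightarrow> \<eta> ^ n \<noteq> 1" by fact
    show "tau \<noteq> 0" using qnz by (simp add: tau_def)
    show "\<forall>k::nat. k \<ge> 1 \<longrightarrow> of_nat k + tau * (1 - \<eta> ^ k) \<noteq> 0"
    proof (intro allI impI notI)
      fix k :: nat assume k: "k \<ge> 1" and z: "of_nat k + tau * (1 - \<eta> ^ k) = 0"
      then have "of_nat q * (of_nat k + tau * (1 - \<eta> ^ k)) = 0" by simp
      then have "of_nat q * of_nat k + (1 - \<eta> ^ k) = (0::'k)" using qnz
        by (simp add: tau_def distrib_left)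
      then have "\<eta> ^ k = of_nat (q * k + 1)" by (simp add: algebra_simps)
      then show False using q(2) k by blast
    qed
  qed
  then interpret duc \<eta> tau .
  show ?thesis using dumod fg monolithic not_artinian by blast
qed


end
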